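(* The finite element scheme "Find $u_h\in V_h$ such that $\int_a^b \mathcal{D}\, u_h^\prime v_h^\prime\,\mathrm{d}x =\int_a^b f v_h\,\mathrm{d}x$ for all $v_h\in V_h$", in the limit $\beta\to 0$ (i.e. for $\beta=0$), is equivalent to the Babuška-Zlámal DG method: Find $u_h\in V_h^D$ such that \begin{equation} \sum_{i=0}^{N}\int_{I_i} u_h^\prime v_h^\prime\,\mathrm{d}x + D\sum_{i=0}^{N+1}[u_h]_{x_i}[v_h]_{x_i}= \int_a^b fv_h\,\mathrm{d}x,\quad \forall v_h\in V_h^D. \end{equation}
   Context: Consider the 1D Poisson problem $-u''=f$ on $(a,b)$ with zero Dirichlet boundary conditions. Take mesh nodes $a=x_0<x_1<\ldots<x_{N+1}=b$ and the discontinuous piecewise linear space $V_h^D=\{v\in L^2([a,b]): v|_{I_i}\in\mathbb{P}_1(I_i),\ i=0,\ldots,N\}$ with $I_i=[x_i,x_{i+1}]$. For $v_h\in V_h^D$ the jump at an interior node is $[v_h]_{x_i}=v_h(x_i^+)-v_h(x_i^-)$, and at the endpoints $[v_h]_{x_0}=v_h(x_0^+)$, $[v_h]_{x_{N+1}}=-v_h(x_{N+1}^-)$. The mesh is enriched with auxiliary nodes $y_i$: $a=y_0<x_0<y_1<x_1<\ldots<y_{N+1}<x_{N+1}=b$, giving intervals $I_i=[x_i,y_{i+1}]$ and small intervals $J_i=[y_i,x_i]$ of length $|J_i|=\beta$ for all $i=0,\dots,N+1$. $V_h$ is the space of continuous piecewise linear functions on this enriched mesh (linear on each $I_i$ and each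 $J_i$) vanishing at $a$ and $b$. The modified diffusion coefficient is $\mathcal{D}(x)=1$ on the $I_i$ and $\mathcal{D}(x)=\beta D$ on the $J_i$, with a constant $D>0$. As $\beta\to 0$ (each $J_i$ collapses to the point $x_i$), values are identified via $u_h(y_i)=u_h(x_i^-)$, $u_h(x_i)=u_h(x_i^+)$, so that every $v_h\in V_h$ is identified with a limiting $v_h\in V_h^D$, and $v_h(x_i)-v_h(y_i)\to[v_h]_{x_i}$. *)

theory Defs
  imports "HOL-Analysis.Analysis"
begin

text \<open>Original mesh nodes: \<xi> 0 = a < \<xi> 1 < ... < \<xi> (N+1) = b.
  A function of the DG space V_h^D is represented by a real function that is affine on
  each open interval (\<xi> i, \<xi> (i+1)), i = 0..N (node values are irrelevant, as for L2).\<close>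

definition in_VhD :: "(nat \<Rightarrow> real) \<Rightarrow> nat \<Rightarrow> (real \<Rightarrow> real) \<Rightarrow> bool" where
  "in_VhD \<xi> N v \<longleftrightarrow>
     (\<forall>i\<le>N. \<exists>c d. \<forall>x\<in>{\<xi> i<..<\<xi> (Suc i)}. v x = c * x + d)"

definition lval :: "(real \<Rightarrow> real) \<Rightarrow> real \<Rightarrow> real" where
  "lval v t = Lim (at_left t) v"

definition rval :: "(real \<Rightarrow> real) \<Rightarrow> real \<Rightarrow> real" where
  "rval v t = Lim (at_right t) v"

definition jump :: "(nat \<Rightarrow> real) \<Rightarrow> nat \<Rightarrow> (real \<Rightarrow> real) \<Rightarrow> nat \<Rightarrow> real" where
  "jump \<xi> N v i =
     (if i = 0 then rval v (\<xi> 0)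
      else if i = Suc N then - lval v (\<xi> (Suc N))
      else rval v (\<xi> i) - lval v (\<xi> i))"

definition bz_form :: "(nat \<Rightarrow> real) \<Rightarrow> nat \<Rightarrow> real \<Rightarrow> (real \<Rightarrow> real) \<Rightarrow> (real \<Rightarrow> real) \<Rightarrow> real" where
  "bz_form \<xi> N D u v =
     (\<Sum>i\<le>N. integral {\<xi> i..\<xi> (Suc i)} (\<lambda>x. deriv u x * deriv v x))
     + D * (\<Sum>i\<le>Suc N. jump \<xi> N u i * jump \<xi> N v i)"

definition pl_interp :: "(nat \<Rightarrow> real) \<Rightarrow> (nat \<Rightarrow> real) \<Rightarrow> nat \<Rightarrow> real \<Rightarrow> real" where
  "pl_interp P V M x =
     (if \<exists>k<M. P k \<le> x \<and> x \<le> P (Suc k) then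
        (let k = (LEAST k. k < M \<and> P k \<le> x \<and> x \<le> P (Suc k))
         in V k + (V (Suc k) - V k) * (x - P k) / (P (Suc k) - P k))
      else 0)"

text \<open>Enriched mesh y_0 < x_0 < y_1 < x_1 < ... < y_(N+1) < x_(N+1), listed as
  z_(2i) = y_i, z_(2i+1) = x_i.\<close>
definition enr_nodes :: "(nat \<Rightarrow> real) \<Rightarrow> (nat \<Rightarrow> real) \<Rightarrow> nat \<Rightarrow> real" where
  "enr_nodes X Y k = (if even k then Y (k div 2) else X (k div 2))"

text \<open>Identification: u_h(y_i) = u_h(x_i^-), u_h(x_i) = u_h(x_i^+), with u_h(a) = u_h(b) = 0.\<close>
definition enr_vals :: "(nat \<Rightarrow> real) \<Rightarrow> nat \<Rightarrow> (real \<Rightarrow> real) \<Rightarrow> nat \<Rightarrow> real" where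
  "enr_vals \<xi> N v k =
     (let i = k div 2 in
      if even k then (if i = 0 then 0 else lval v (\<xi> i))
      else (if i = Suc N then 0 else rval v (\<xi> i)))"

definition embed :: "(nat \<Rightarrow> real) \<Rightarrow> nat \<Rightarrow> (nat \<Rightarrow> real) \<Rightarrow> (nat \<Rightarrow> real)
    \<Rightarrow> (real \<Rightarrow> real) \<Rightarrow> real \<Rightarrow> real" where
  "embed \<xi> N X Y v = pl_interp (enr_nodes X Y) (enr_vals \<xi> N v) (2 * N + 3)"

definition Dcoef :: "nat \<Rightarrow> (nat \<Rightarrow> real) \<Rightarrow> (nat \<Rightarrow> real) \<Rightarrow> real \<Rightarrow> real \<Rightarrow> real \<Rightarrow> real" where
  "Dcoef N X Y D \<beta> x = (if \<exists>i\<le>Suc N. Y i \<le> x \<and> x \<le> X i then \<beta> * D else 1)"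

definition fe_form :: "real \<Rightarrow> real \<Rightarrow> nat \<Rightarrow> (nat \<Rightarrow> real) \<Rightarrow> (nat \<Rightarrow> real) \<Rightarrow> real \<Rightarrow> real
    \<Rightarrow> (real \<Rightarrow> real) \<Rightarrow> (real \<Rightarrow> real) \<Rightarrow> real" where
  "fe_form a b N X Y D \<beta> w z =
     integral {a..b} (\<lambda>x. Dcoef N X Y D \<beta> x * deriv w x * deriv z x)"

end

theory Submission
  imports Defs
begin

lemma mono_pts:
  fixes P :: "nat \<Rightarrow> real"
  assumes "\<forall>k<M. P k \<le> P (Suc k)" "i \<le> j" "j \<le> M"
  shows "P i \<le> P j"
  using assms(2,3)
proof (induction j)
  case 0 then show ?case by simp
next
  case (Suc j)
  show ?case
  proof (cases "i = Suc j")
    case True then show ?thesis by simp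
  next
    case False
    then have "i \<le> j" using Suc.prems by simp
    then have "P i \<le> P j" using Suc.IH Suc.prems by simp
    also have "P j \<le> P (Suc j)" using assms(1) Suc.prems by simp
    finally show ?thesis .
  qed
qed

lemma smono_pts:
  fixes P :: "nat \<Rightarrow> real"
  assumes "\<forall>k<M. P k < P (Suc k)" "i < j" "j \<le> M"
  shows "P i < P j"
  using assms(2,3)
proof (induction j)
  case 0 then show ?case by simp
next
  case (Suc j)
  show ?case
  proof (cases "i = j")
    case True then show ?thesis using assms(1) Suc.prems by simp
  next
    case False
    then have "i < j" using Suc.prems by simp
    then have "P i < P j" using Suc.IH Suc.prems by simp
    also have "P j < P (Suc j)" using assms(1) Suc.prems by simp
    finally show ?thesis .
  qed
qed

lemma pieces_has_integral:
  fixes P :: "nat \<Rightarrow> real"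
  fixes h :: "real \<Rightarrow> real"
  assumes "\<forall>k<M. P k \<le> P (Suc k)" "\<forall>k<M. (h has_integral I k) {P k..P (Suc k)}"
  shows "(h has_integral (\<Sum>k<M. I k)) {P 0..P M}"
  using assms
proof (induction M)
  case 0 then show ?case using has_integral_refl(2)[of h "P 0"] by simp
next
  case (Suc M)
  have ih: "(h has_integral (\<Sum>k<M. I k)) {P 0..P M}" using Suc by simp
  have "P 0 \<le> P M" using mono_pts[OF Suc.prems(1), of 0 M] by simp
  moreover have "P M \<le> P (Suc M)" using Suc.prems(1) by simp
  moreover have "(h has_integral I M) {P M..P (Suc M)}" using Suc.prems(2) by simp
  ultimately show ?case using has_integral_combine[OF _ _ ih] by (simp add: add.commute)
qed

lemma const_piece:
  fixes p q :: real
  assumes "p \<le> q" "\<And>x. x \<in> {p<..<q} \<Longrightarrow> h x = C"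
  shows "(h has_integral C * (q - p)) {p..q}"
proof -
  have c: "((\<lambda>x. C) has_integral C * (q - p)) {p..q}"
    using has_integral_const_real[of C p q] assms(1) by (simp add: mult.commute)
  show ?thesis
    using has_integral_spike_finite[OF _ _ c, of "{p,q}" h] assms(2) by auto
qed

lemma aff_piece:
  fixes f w :: "real \<Rightarrow> real"
  assumes "f integrable_on {p..q}" "(\<lambda>x. x * f x) integrable_on {p..q}" "p < q"
    "\<And>x. x \<in> {p<..<q} \<Longrightarrow> w x = V0 + (V1 - V0) * (x - p) / (q - p)"
  shows "((\<lambda>x. f x * w x) has_integral
     (V0 * integral {p..q} f + (V1 - V0) / (q - p) *
        (integral {p..q} (\<lambda>x. x * f x) - p * integral {p..q} f))) {p..q}"
proof -
  have i1: "(f has_integral integral {p..q} f) {p..q}" using assms(1) by auto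
  have i2: "((\<lambda>x. x * f x) has_integral integral {p..q} (\<lambda>x. x * f x)) {p..q}" using assms(2) by auto
  have "((\<lambda>x. V0 * f x + (V1 - V0) / (q - p) * (x * f x - p * f x)) has_integral
     (V0 * integral {p..q} f + (V1 - V0) / (q - p) *
        (integral {p..q} (\<lambda>x. x * f x) - p * integral {p..q} f))) {p..q}"
    by (intro has_integral_add has_integral_mult_right has_integral_diff i1 i2)
  note c = this
  have e: "f x * w x = V0 * f x + (V1 - V0) / (q - p) * (x * f x - p * f x)"
    if "x \<in> {p..q} - {p,q}" for x
  proof -
    have "x \<in> {p<..<q}" using that by auto
    then have wx: "w x = V0 + (V1 - V0) * (x - p) / (q - p)" using assms(4) by blast
    have d: "(V1 - V0) * (x - p) / (q - p) = (V1 - V0) / (q - p) * (x - p)" by simp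
    have g: "f x * (V0 + c * (x - p)) = V0 * f x + c * (x * f x - p * f x)" for c :: real
      by (simp add: algebra_simps)
    show ?thesis by (simp only: wx d g)
  qed
  show ?thesis using has_integral_spike_finite[OF _ _ c, of "{p,q}"] e by auto
qed

lemma aff_closed_bound:
  fixes x p q V0 V1 :: real
  assumes "p < q" "x \<in> {p..q}"
  shows "\<bar>V0 + (V1 - V0) * (x - p) / (q - p)\<bar> \<le> \<bar>V0\<bar> + \<bar>V1\<bar>"
proof -
  define t where "t = (x - p) / (q - p)"
  have qp: "0 < q - p" using assms(1) by simp
  have t0: "0 \<le> t" unfolding t_def using assms(2) qp by simp
  have t1: "t \<le> 1" unfolding t_def using assms(2) qp by (simp add: divide_le_eq_1)
  have e0: "V0 + (V1 - V0) * (x - p) / (q - p) = V0 + (V1 - V0) * t"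
    unfolding t_def by simp
  have e: "V0 + (V1 - V0) * (x - p) / (q - p) = (1 - t) * V0 + t * V1"
    unfolding e0 by (simp add: algebra_simps)
  have a1: "\<bar>(1 - t) * V0\<bar> \<le> \<bar>V0\<bar>"
    using t0 t1 by (simp add: abs_mult mult_left_le_one_le)
  have a2: "\<bar>t * V1\<bar> \<le> \<bar>V1\<bar>"
    using t0 t1 by (simp add: abs_mult mult_left_le_one_le)
  have "\<bar>(1 - t) * V0 + t * V1\<bar> \<le> \<bar>(1 - t) * V0\<bar> + \<bar>t * V1\<bar>" by (rule abs_triangle_ineq)
  then show ?thesis unfolding e using a1 a2 by linarith
qed
lemma aff_bound:
  fixes f :: "real \<Rightarrow> real"
  assumes "f integrable_on {p..q}" "(\<lambda>x. x * f x) integrable_on {p..q}"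
    "(\<lambda>x. \<bar>f x\<bar>) integrable_on {p..q}" "p < q"
  shows "\<bar>V0 * integral {p..q} f + (V1 - V0) / (q - p) *
        (integral {p..q} (\<lambda>x. x * f x) - p * integral {p..q} f)\<bar>
      \<le> (\<bar>V0\<bar> + \<bar>V1\<bar>) * integral {p..q} (\<lambda>x. \<bar>f x\<bar>)"
proof -
  let ?w = "\<lambda>x. V0 + (V1 - V0) * (x - p) / (q - p)"
  let ?L = "V0 * integral {p..q} f + (V1 - V0) / (q - p) *
        (integral {p..q} (\<lambda>x. x * f x) - p * integral {p..q} f)"
  have h: "((\<lambda>x. f x * ?w x) has_integral ?L) {p..q}"
    by (rule aff_piece[OF assms(1,2,4)]) simp
  have g: "((\<lambda>x. (\<bar>V0\<bar> + \<bar>V1\<bar>) * \<bar>f x\<bar>) has_integral (\<bar>V0\<bar> + \<bar>V1\<bar>) * integral {p..q} (\<lambda>x. \<bar>f x\<bar>)) {p..q}"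
    using assms(3) by (intro has_integral_mult_right) auto
  have "norm (integral {p..q} (\<lambda>x. f x * ?w x)) \<le> integral {p..q} (\<lambda>x. (\<bar>V0\<bar> + \<bar>V1\<bar>) * \<bar>f x\<bar>)"
  proof (rule Henstock_Kurzweil_Integration.integral_norm_bound_integral)
    show "(\<lambda>x. f x * ?w x) integrable_on {p..q}" using h by auto
    show "(\<lambda>x. (\<bar>V0\<bar> + \<bar>V1\<bar>) * \<bar>f x\<bar>) integrable_on {p..q}" using g by auto
    fix x assume "x \<in> {p..q}"
    then have "\<bar>?w x\<bar> \<le> \<bar>V0\<bar> + \<bar>V1\<bar>" using aff_closed_bound[OF assms(4)] by blast
    then show "norm (f x * ?w x) \<le> (\<bar>V0\<bar> + \<bar>V1\<bar>) * \<bar>f x\<bar>"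
      by (simp add: abs_mult mult.commute mult_left_mono)
  qed
  then show ?thesis using h g by (simp add: integral_unique)
qed

lemma integral_limit:
  fixes g :: "real \<Rightarrow> real" and p q :: "real \<Rightarrow> real"
  assumes g: "g integrable_on {a..b}" and pl: "(p \<longlongrightarrow> p0) F" and ql: "(q \<longlongrightarrow> q0) F"
    and ev: "eventually (\<lambda>t. a \<le> p t \<and> p t \<le> q t \<and> q t \<le> b) F"
    and le: "a \<le> p0" "p0 \<le> q0" "q0 \<le> b"
  shows "((\<lambda>t. integral {p t..q t} g) \<longlongrightarrow> integral {p0..q0} g) F"
proof -
  define \<Phi> where "\<Phi> x = integral {a..x} g" for x
  have c: "continuous_on {a..b} \<Phi>" unfolding \<Phi>_def by (rule indefinite_integral_continuous_1[OF g])
  have eq: "integral {r..s} g = \<Phi> s - \<Phi> r" if "a \<le> r" "r \<le> s" "s \<le> b" for r s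
  proof -
    have "g integrable_on {a..s}" using g that by (intro integrable_subinterval_real[OF g]) auto
    then have "integral {a..r} g + integral {r..s} g = integral {a..s} g"
      using that by (intro Henstock_Kurzweil_Integration.integral_combine) auto
    then show ?thesis unfolding \<Phi>_def by simp
  qed
  have "((\<lambda>t. \<Phi> (q t) - \<Phi> (p t)) \<longlongrightarrow> \<Phi> q0 - \<Phi> p0) F"
  proof (intro tendsto_diff)
    have evq: "eventually (\<lambda>t. q t \<in> {a..b}) F" using ev by (auto elim: eventually_mono)
    have evp: "eventually (\<lambda>t. p t \<in> {a..b}) F" using ev by (auto elim: eventually_mono)
    show "((\<lambda>t. \<Phi> (q t)) \<longlongrightarrow> \<Phi> q0) F"
      using continuous_on_tendsto_compose[OF c ql _ evq] le by (simp add: o_def)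
    show "((\<lambda>t. \<Phi> (p t)) \<longlongrightarrow> \<Phi> p0) F"
      using continuous_on_tendsto_compose[OF c pl _ evp] le by (simp add: o_def)
  qed
  then have "((\<lambda>t. integral {p t..q t} g) \<longlongrightarrow> \<Phi> q0 - \<Phi> p0) F"
    by (rule Lim_transform_eventually) (use ev eq in \<open>auto elim!: eventually_mono\<close>)
  then show ?thesis using eq le by simp
qed

lemma pl_formula:
  fixes P V :: "nat \<Rightarrow> real"
  assumes sm: "\<forall>k<M. P k < P (Suc k)" and k: "k < M" and x: "x \<in> {P k<..<P (Suc k)}"
  shows "pl_interp P V M x = V k + (V (Suc k) - V k) * (x - P k) / (P (Suc k) - P k)"
proof -
  have ex: "\<exists>k<M. P k \<le> x \<and> x \<le> P (Suc k)" using k x by auto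
  have le: "P i \<le> P j" if "i \<le> j" "j \<le> M" for i j
    using mono_pts[of M P i j] sm that by (simp add: less_imp_le)
  have L: "(LEAST k. k < M \<and> P k \<le> x \<and> x \<le> P (Suc k)) = k"
  proof (rule Least_equality)
    show "k < M \<and> P k \<le> x \<and> x \<le> P (Suc k)" using k x by auto
    fix k' assume k': "k' < M \<and> P k' \<le> x \<and> x \<le> P (Suc k')"
    show "k \<le> k'"
    proof (rule ccontr)
      assume "\<not> k \<le> k'"
      then have "Suc k' \<le> k" by simp
      then have "P (Suc k') \<le> P k" using le k by simp
      then show False using k' x by auto
    qed
  qed
  show ?thesis unfolding pl_interp_def using ex L by (simp add: Let_def)
qed

lemma pl_deriv:
  fixes P V :: "nat \<Rightarrow> real"
  assumes sm: "\<forall>k<M. P k < P (Suc k)" and k: "k < M" and x: "x \<in> {P k<..<P (Suc k)}"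
  shows "deriv (pl_interp P V M) x = (V (Suc k) - V k) / (P (Suc k) - P k)"
proof -
  let ?g = "\<lambda>y. V k + (V (Suc k) - V k) * (y - P k) / (P (Suc k) - P k)"
  have ne: "P (Suc k) \<noteq> P k" using sm k by force
  have "(?g has_field_derivative (V (Suc k) - V k) / (P (Suc k) - P k)) (at x)"
    using ne by (auto intro!: derivative_eq_intros)
  then have "(pl_interp P V M has_field_derivative (V (Suc k) - V k) / (P (Suc k) - P k)) (at x)"
    by (rule has_field_derivative_transform_within_open[of _ _ _ "{P k<..<P (Suc k)}"])
       (use x pl_formula[OF sm k] in auto)
  then show ?thesis by (rule DERIV_imp_deriv)
qed

lemma lr_vals:
  fixes v :: "real \<Rightarrow> real"
  assumes "p < q" "\<forall>x\<in>{p<..<q}. v x = c * x + d"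
  shows "lval v q = c * q + d" "rval v p = c * p + d"
proof -
  have "((\<lambda>x. c * x + d) \<longlongrightarrow> c * q + d) (at_left q)"
    by (intro tendsto_intros)
  then have "(v \<longlongrightarrow> c * q + d) (at_left q)"
    by (rule Lim_transform_eventually)
       (use eventually_at_left_real[OF assms(1)] assms(2) in \<open>auto elim: eventually_mono\<close>)
  then show "lval v q = c * q + d" unfolding lval_def
    by (intro tendsto_Lim) auto
  have "((\<lambda>x. c * x + d) \<longlongrightarrow> c * p + d) (at_right p)"
    by (intro tendsto_intros)
  then have "(v \<longlongrightarrow> c * p + d) (at_right p)"
    by (rule Lim_transform_eventually)
       (use eventually_at_right_real[OF assms(1)] assms(2) in \<open>auto elim: eventually_mono\<close>)
  then show "rval v p = c * p + d" unfolding rval_def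
    by (intro tendsto_Lim) auto
qed

lemma vals_odd: "i \<le> N \<Longrightarrow> enr_vals \<xi> N v (2 * i + 1) = rval v (\<xi> i)"
  by (simp add: enr_vals_def Let_def)

lemma vals_even: "enr_vals \<xi> N v (2 * Suc i) = lval v (\<xi> (Suc i))"
  by (simp add: enr_vals_def Let_def)

lemma vals_jump: "i \<le> Suc N \<Longrightarrow> enr_vals \<xi> N v (2 * i + 1) - enr_vals \<xi> N v (2 * i) = jump \<xi> N v i"
  by (auto simp add: enr_vals_def Let_def jump_def)

lemma nodes_simps[simp]:
 "enr_nodes X Y (2*i) = Y i" "enr_nodes X Y (Suc (2*i)) = X i"
 "enr_nodes X Y (Suc (Suc (2*i))) = Y (Suc i)" "enr_nodes X Y (Suc (Suc (Suc (2*i)))) = X (Suc i)"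
 by (simp_all add: enr_nodes_def)

lemma vals_simps[simp]:
 "i \<le> N \<Longrightarrow> enr_vals \<xi> N v (Suc (2*i)) = rval v (\<xi> i)"
 "enr_vals \<xi> N v (Suc (Suc (2*i))) = lval v (\<xi> (Suc i))"
 by (simp_all add: enr_vals_def Let_def)

lemma nodes_last[simp]: "enr_nodes X Y (2 * N + 3) = X (Suc N)"
proof -
  have e: "2 * N + 3 = Suc (Suc (Suc (2 * N)))" by simp
  show ?thesis unfolding e by (rule nodes_simps(4))
qed

lemma nodes_even: "enr_nodes X Y (2 * i) = Y i"
  by (simp add: enr_nodes_def)

lemma nodes_odd: "enr_nodes X Y (2 * i + 1) = X i"
  by (simp add: enr_nodes_def)

lemma sum_split_eo:
  fixes g :: "nat \<Rightarrow> real"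
  shows "(\<Sum>k<2 * m + 1. g k) = (\<Sum>i\<le>m. g (2 * i)) + (\<Sum>i<m. g (2 * i + 1))"
proof (induction m)
  case 0 then show ?case by simp
next
  case (Suc m)
  have "(\<Sum>k<2 * Suc m + 1. g k) = (\<Sum>k<2 * m + 1. g k) + g (2 * m + 1) + g (2 * Suc m)"
    by (simp add: numeral_2_eq_2)
  then show ?case using Suc by simp
qed

definition Lf :: "(real \<Rightarrow> real) \<Rightarrow> real \<Rightarrow> real \<Rightarrow> real \<Rightarrow> real \<Rightarrow> real" where
  "Lf f p q V0 V1 = V0 * integral {p..q} f + (V1 - V0) / (q - p) *
        (integral {p..q} (\<lambda>x. x * f x) - p * integral {p..q} f)"

definition enr_ok :: "real \<Rightarrow> real \<Rightarrow> nat \<Rightarrow> (nat \<Rightarrow> real) \<Rightarrow> (nat \<Rightarrow> real) \<Rightarrow> real \<Rightarrow> bool" where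
  "enr_ok a b N X Y \<beta> \<longleftrightarrow> \<beta> > 0 \<and> Y 0 = a \<and> X (Suc N) = b
        \<and> (\<forall>i\<le>Suc N. X i - Y i = \<beta>) \<and> (\<forall>i\<le>N. X i < Y (Suc i))"

lemma k_cases:
  fixes k :: nat
  obtains i where "k = 2 * i" | i where "k = 2 * i + 1"
proof -
  have "k = 2 * (k div 2) \<or> k = 2 * (k div 2) + 1" by presburger
  then show ?thesis using that by blast
qed

lemma enr_strict:
  assumes E: "enr_ok a b N X Y \<beta>"
  shows "\<forall>k<2 * N + 3. enr_nodes X Y k < enr_nodes X Y (Suc k)"
proof (intro allI impI)
  fix k assume k: "k < 2 * N + 3"
  show "enr_nodes X Y k < enr_nodes X Y (Suc k)"
  proof (cases k rule: k_cases)
    case (1 i)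
    then have "i \<le> Suc N" using k by simp
    then have "X i - Y i = \<beta>" using E by (simp add: enr_ok_def)
    then show ?thesis using 1 E by (simp add: enr_ok_def enr_nodes_def)
  next
    case (2 i)
    then have i: "i \<le> N" using k by simp
    show ?thesis using 2 E i by (simp add: enr_ok_def)
  qed
qed

lemma enr_ends:
  assumes E: "enr_ok a b N X Y \<beta>"
  shows "enr_nodes X Y 0 = a" "enr_nodes X Y (2 * N + 3) = b"
proof -
  show "enr_nodes X Y 0 = a" using E by (simp add: enr_ok_def enr_nodes_def)
  show "enr_nodes X Y (2 * N + 3) = b" using E by (simp add: enr_ok_def)
qed

lemma Dcoef_piece:
  assumes E: "enr_ok a b N X Y \<beta>" and k: "k < 2 * N + 3"
    and x: "x \<in> {enr_nodes X Y k<..<enr_nodes X Y (Suc k)}"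
  shows "Dcoef N X Y D \<beta> x = (if even k then \<beta> * D else 1)"
proof -
  let ?P = "enr_nodes X Y"
  have sm: "\<forall>k<2 * N + 3. ?P k < ?P (Suc k)" by (rule enr_strict[OF E])
  have le: "?P i \<le> ?P j" if "i \<le> j" "j \<le> 2 * N + 3" for i j
    using mono_pts[of "2 * N + 3" ?P i j] sm that by (simp add: less_imp_le)
  show ?thesis
  proof (cases k rule: k_cases)
    case (1 i)
    then have "i \<le> Suc N" using k by simp
    moreover have "Y i \<le> x \<and> x \<le> X i" using x 1 nodes_odd[of X Y i] nodes_even[of X Y i] by simp
    ultimately show ?thesis unfolding Dcoef_def using 1 by auto
  next
    case (2 i)
    then have i: "i \<le> N" using k by simp
    have xi: "X i < x" "x < Y (Suc i)" using x 2 by auto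
    have "\<not> (Y j \<le> x \<and> x \<le> X j)" if j: "j \<le> Suc N" for j
    proof (cases "j \<le> i")
      case True
      have "?P (2 * j + 1) \<le> ?P (2 * i + 1)" by (rule le) (use True i in auto)
      then show ?thesis using xi by simp
    next
      case False
      have "?P (2 * Suc i) \<le> ?P (2 * j)" by (rule le) (use False j in auto)
      then show ?thesis using xi by simp
    qed
    then show ?thesis unfolding Dcoef_def using 2 by auto
  qed
qed

lemma fe_eq:
  assumes E: "enr_ok a b N X Y \<beta>"
  shows "fe_form a b N X Y D \<beta> (embed \<xi> N X Y u) (embed \<xi> N X Y v) =
     (\<Sum>i\<le>Suc N. D * jump \<xi> N u i * jump \<xi> N v i)
     + (\<Sum>i\<le>N. (lval u (\<xi> (Suc i)) - rval u (\<xi> i)) * (lval v (\<xi> (Suc i)) - rval v (\<xi> i))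
                / (Y (Suc i) - X i))"
proof -
  let ?P = "enr_nodes X Y" and ?M = "2 * N + 3"
  let ?Vu = "enr_vals \<xi> N u" and ?Vv = "enr_vals \<xi> N v"
  let ?h = "\<lambda>x. Dcoef N X Y D \<beta> x * deriv (embed \<xi> N X Y u) x * deriv (embed \<xi> N X Y v) x"
  have sm: "\<forall>k<?M. ?P k < ?P (Suc k)" by (rule enr_strict[OF E])
  define I where "I k = (if even k then \<beta> * D else 1)
      * ((?Vu (Suc k) - ?Vu k) / (?P (Suc k) - ?P k))
      * ((?Vv (Suc k) - ?Vv k) / (?P (Suc k) - ?P k)) * (?P (Suc k) - ?P k)" for k
  have "\<forall>k<?M. (?h has_integral I k) {?P k..?P (Suc k)}"
  proof (intro allI impI)
    fix k assume k: "k < ?M"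
    show "(?h has_integral I k) {?P k..?P (Suc k)}"
      unfolding I_def
    proof (rule const_piece)
      show "?P k \<le> ?P (Suc k)" using sm k by (simp add: less_imp_le)
      fix x assume x: "x \<in> {?P k<..<?P (Suc k)}"
      show "?h x = (if even k then \<beta> * D else 1)
      * ((?Vu (Suc k) - ?Vu k) / (?P (Suc k) - ?P k))
      * ((?Vv (Suc k) - ?Vv k) / (?P (Suc k) - ?P k))"
        unfolding embed_def using Dcoef_piece[OF E k x] pl_deriv[OF sm k x] by simp
    qed
  qed
  then have "(?h has_integral (\<Sum>k<?M. I k)) {?P 0..?P ?M}"
    using sm by (intro pieces_has_integral) (auto simp: less_imp_le)
  then have "fe_form a b N X Y D \<beta> (embed \<xi> N X Y u) (embed \<xi> N X Y v) = (\<Sum>k<?M. I k)"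
    unfolding fe_form_def using enr_ends[OF E] by (simp add: integral_unique mult.assoc)
  also have "?M = 2 * Suc N + 1" by simp
  also have "(\<Sum>k<2 * Suc N + 1. I k) = (\<Sum>i\<le>Suc N. I (2 * i)) + (\<Sum>i<Suc N. I (2 * i + 1))"
    by (rule sum_split_eo)
  also have "(\<Sum>i\<le>Suc N. I (2 * i)) = (\<Sum>i\<le>Suc N. D * jump \<xi> N u i * jump \<xi> N v i)"
  proof (rule sum.cong)
    fix i assume "i \<in> {..Suc N}"
    then have i: "i \<le> Suc N" by simp
    have b: "X i - Y i = \<beta>" "\<beta> > 0" using E i by (auto simp: enr_ok_def)
    show "I (2 * i) = D * jump \<xi> N u i * jump \<xi> N v i"
      unfolding I_def using vals_jump[OF i, of \<xi> u] vals_jump[OF i, of \<xi> v] b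
      by (simp add: nodes_even nodes_odd)
  qed simp
  also have "(\<Sum>i<Suc N. I (2 * i + 1)) = (\<Sum>i\<le>N. (lval u (\<xi> (Suc i)) - rval u (\<xi> i)) * (lval v (\<xi> (Suc i)) - rval v (\<xi> i))
                / (Y (Suc i) - X i))"
    unfolding lessThan_Suc_atMost
  proof (rule sum.cong)
    fix i assume "i \<in> {..N}"
    then have i: "i \<le> N" by simp
    have s: "Suc (2 * i + 1) = 2 * Suc i" by simp
    have ne: "Y (Suc i) - X i \<noteq> 0" using E i by (auto simp: enr_ok_def)
    show "I (2 * i + 1) = (lval u (\<xi> (Suc i)) - rval u (\<xi> i)) * (lval v (\<xi> (Suc i)) - rval v (\<xi> i))
                / (Y (Suc i) - X i)"
      unfolding I_def s using ne i
      by (simp add: nodes_even nodes_odd vals_even vals_odd power2_eq_square)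
  qed simp
  finally show ?thesis .
qed

lemma enr_range:
  assumes E: "enr_ok a b N X Y \<beta>" and k: "k \<le> 2 * N + 3"
  shows "a \<le> enr_nodes X Y k" "enr_nodes X Y k \<le> b"
proof -
  have sm: "\<forall>k<2 * N + 3. enr_nodes X Y k < enr_nodes X Y (Suc k)" by (rule enr_strict[OF E])
  have le: "enr_nodes X Y i \<le> enr_nodes X Y j" if "i \<le> j" "j \<le> 2 * N + 3" for i j
    using mono_pts[of "2 * N + 3" "enr_nodes X Y" i j] sm that by (simp add: less_imp_le)
  show "a \<le> enr_nodes X Y k" using le[of 0 k] k enr_ends[OF E] by simp
  show "enr_nodes X Y k \<le> b" using le[of k "2 * N + 3"] k enr_ends[OF E] by simp
qed

lemma enr_bounds:
  assumes E: "enr_ok a b N X Y \<beta>"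
  shows "i \<le> Suc N \<Longrightarrow> a \<le> Y i \<and> Y i \<le> X i \<and> X i \<le> b"
    and "i \<le> N \<Longrightarrow> a \<le> X i \<and> X i \<le> Y (Suc i) \<and> Y (Suc i) \<le> b"
proof -
  assume i: "i \<le> Suc N"
  have "a \<le> enr_nodes X Y (2 * i + 1)" "enr_nodes X Y (2 * i) \<le> b"
    "a \<le> enr_nodes X Y (2 * i)" "enr_nodes X Y (2 * i + 1) \<le> b"
    using enr_range[OF E, of "2 * i + 1"] enr_range[OF E, of "2 * i"] i by auto
  moreover have "X i - Y i = \<beta>" "\<beta> > 0" using E i by (auto simp: enr_ok_def)
  ultimately show "a \<le> Y i \<and> Y i \<le> X i \<and> X i \<le> b" by (simp add: nodes_even nodes_odd)
next
  assume i: "i \<le> N"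
  have "a \<le> enr_nodes X Y (2 * i + 1)" "enr_nodes X Y (2 * Suc i) \<le> b"
    using enr_range[OF E, of "2 * i + 1"] enr_range[OF E, of "2 * Suc i"] i by auto
  moreover have "X i < Y (Suc i)" using E i by (auto simp: enr_ok_def)
  ultimately show "a \<le> X i \<and> X i \<le> Y (Suc i) \<and> Y (Suc i) \<le> b"
    by (simp add: nodes_even nodes_odd)
qed

lemma fint_eq:
  fixes f :: "real \<Rightarrow> real"
  assumes E: "enr_ok a b N X Y \<beta>" and fi: "f integrable_on {a..b}" "(\<lambda>x. x * f x) integrable_on {a..b}"
  shows "integral {a..b} (\<lambda>x. f x * embed \<xi> N X Y v x) =
     (\<Sum>i\<le>Suc N. Lf f (Y i) (X i) (enr_vals \<xi> N v (2 * i)) (enr_vals \<xi> N v (2 * i + 1)))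
     + (\<Sum>i\<le>N. Lf f (X i) (Y (Suc i)) (rval v (\<xi> i)) (lval v (\<xi> (Suc i))))"
proof -
  let ?P = "enr_nodes X Y" and ?M = "2 * N + 3"
  let ?V = "enr_vals \<xi> N v"
  have sm: "\<forall>k<?M. ?P k < ?P (Suc k)" by (rule enr_strict[OF E])
  define I where "I k = Lf f (?P k) (?P (Suc k)) (?V k) (?V (Suc k))" for k
  have "\<forall>k<?M. ((\<lambda>x. f x * embed \<xi> N X Y v x) has_integral I k) {?P k..?P (Suc k)}"
  proof (intro allI impI)
    fix k assume k: "k < ?M"
    have sub: "{?P k..?P (Suc k)} \<subseteq> {a..b}"
      using enr_range[OF E, of k] enr_range[OF E, of "Suc k"] k by auto
    show "((\<lambda>x. f x * embed \<xi> N X Y v x) has_integral I k) {?P k..?P (Suc k)}"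
      unfolding I_def Lf_def
    proof (rule aff_piece)
      show "f integrable_on {?P k..?P (Suc k)}" by (rule integrable_subinterval_real[OF fi(1) sub])
      show "(\<lambda>x. x * f x) integrable_on {?P k..?P (Suc k)}" by (rule integrable_subinterval_real[OF fi(2) sub])
      show "?P k < ?P (Suc k)" using sm k by simp
      fix x assume x: "x \<in> {?P k<..<?P (Suc k)}"
      show "embed \<xi> N X Y v x = ?V k + (?V (Suc k) - ?V k) * (x - ?P k) / (?P (Suc k) - ?P k)"
        unfolding embed_def by (rule pl_formula[OF sm k x])
    qed
  qed
  then have "((\<lambda>x. f x * embed \<xi> N X Y v x) has_integral (\<Sum>k<?M. I k)) {?P 0..?P ?M}"
    using sm by (intro pieces_has_integral) (auto simp: less_imp_le)
  then have "integral {a..b} (\<lambda>x. f x * embed \<xi> N X Y v x) = (\<Sum>k<?M. I k)"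
    using enr_ends[OF E] by (simp add: integral_unique)
  also have "?M = 2 * Suc N + 1" by simp
  also have "(\<Sum>k<2 * Suc N + 1. I k) = (\<Sum>i\<le>Suc N. I (2 * i)) + (\<Sum>i<Suc N. I (2 * i + 1))"
    by (rule sum_split_eo)
  also have "(\<Sum>i\<le>Suc N. I (2 * i)) = (\<Sum>i\<le>Suc N. Lf f (Y i) (X i) (?V (2 * i)) (?V (2 * i + 1)))"
    unfolding I_def by (simp add: nodes_even nodes_odd)
  also have "(\<Sum>i<Suc N. I (2 * i + 1)) = (\<Sum>i\<le>N. Lf f (X i) (Y (Suc i)) (rval v (\<xi> i)) (lval v (\<xi> (Suc i))))"
    unfolding lessThan_Suc_atMost
  proof (rule sum.cong)
    fix i assume "i \<in> {..N}"
    then have i: "i \<le> N" by simp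
    have s: "Suc (2 * i + 1) = 2 * Suc i" by simp
    show "I (2 * i + 1) = Lf f (X i) (Y (Suc i)) (rval v (\<xi> i)) (lval v (\<xi> (Suc i)))"
      unfolding I_def s using i by (simp add: nodes_even nodes_odd vals_even vals_odd)
  qed simp
  finally show ?thesis .
qed

lemma deriv_aff:
  fixes w :: "real \<Rightarrow> real"
  assumes "x \<in> {p<..<q}" "\<forall>y\<in>{p<..<q}. w y = c * y + d"
  shows "deriv w x = c"
proof -
  have "((\<lambda>y. c * y + d) has_field_derivative c) (at x)"
    by (auto intro!: derivative_eq_intros)
  then have "(w has_field_derivative c) (at x)"
    by (rule has_field_derivative_transform_within_open[of _ _ _ "{p<..<q}"]) (use assms in auto)
  then show ?thesis by (rule DERIV_imp_deriv)
qed

lemma aff_id: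
  fixes c d p q x :: real
  assumes "p \<noteq> q"
  shows "c * x + d = (c * p + d) + ((c * q + d) - (c * p + d)) * (x - p) / (q - p)"
proof -
  have "(c * q + d) - (c * p + d) = c * (q - p)" by (simp add: algebra_simps)
  moreover have "c * (q - p) * (x - p) / (q - p) = c * (x - p)" using assms by simp
  ultimately show ?thesis by (simp add: algebra_simps)
qed

lemma coef_choice:
  assumes "in_VhD \<xi> N w"
  shows "\<exists>c d. \<forall>i\<le>N. \<forall>x\<in>{\<xi> i<..<\<xi> (Suc i)}. w x = c i * x + d i"
proof -
  have "\<forall>i. \<exists>cd. i \<le> N \<longrightarrow> (\<forall>x\<in>{\<xi> i<..<\<xi> (Suc i)}. w x = fst cd * x + snd cd)"
    using assms unfolding in_VhD_def by fastforce
  then obtain g where g: "\<forall>i. i \<le> N \<longrightarrow> (\<forall>x\<in>{\<xi> i<..<\<xi> (Suc i)}. w x = fst (g i) * x + snd (g i))"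
    using choice[of "\<lambda>i cd. i \<le> N \<longrightarrow> (\<forall>x\<in>{\<xi> i<..<\<xi> (Suc i)}. w x = fst cd * x + snd cd)"] by blast
  show ?thesis
    by (rule exI[of _ "\<lambda>i. fst (g i)"], rule exI[of _ "\<lambda>i. snd (g i)"]) (use g in auto)
qed

lemma main_limit:
  fixes a b D :: real and N :: nat and \<xi> :: "nat \<Rightarrow> real" and f u v :: "real \<Rightarrow> real"
    and X Y :: "real \<Rightarrow> nat \<Rightarrow> real"
  assumes mesh: "\<xi> 0 = a" "\<xi> (Suc N) = b" "\<forall>i\<le>N. \<xi> i < \<xi> (Suc i)"
    and f: "f absolutely_integrable_on {a..b}"
    and enriched: "\<forall>\<^sub>F \<beta> in at_right 0.
        Y \<beta> 0 = a \<and> X \<beta> (Suc N) = b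
        \<and> (\<forall>i\<le>Suc N. X \<beta> i - Y \<beta> i = \<beta>)
        \<and> (\<forall>i\<le>N. X \<beta> i < Y \<beta> (Suc i))"
    and collapse: "\<forall>i\<le>Suc N. ((\<lambda>\<beta>. X \<beta> i) \<longlongrightarrow> \<xi> i) (at_right 0)"
    and u: "in_VhD \<xi> N u" and v: "in_VhD \<xi> N v"
  shows "((\<lambda>\<beta>. fe_form a b N (X \<beta>) (Y \<beta>) D \<beta>
                      (embed \<xi> N (X \<beta>) (Y \<beta>) u) (embed \<xi> N (X \<beta>) (Y \<beta>) v)
                    - integral {a..b} (\<lambda>x. f x * embed \<xi> N (X \<beta>) (Y \<beta>) v x))
          \<longlongrightarrow> bz_form \<xi> N D u v - integral {a..b} (\<lambda>x. f x * v x)) (at_right 0)"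
proof -
  have ev: "eventually (\<lambda>\<beta>. enr_ok a b N (X \<beta>) (Y \<beta>) \<beta>) (at_right 0)"
    using eventually_conj[OF enriched eventually_at_right_less[of "0::real"]]
  proof (rule eventually_mono)
    fix \<beta> :: real
    assume "(Y \<beta> 0 = a \<and> X \<beta> (Suc N) = b
        \<and> (\<forall>i\<le>Suc N. X \<beta> i - Y \<beta> i = \<beta>)
        \<and> (\<forall>i\<le>N. X \<beta> i < Y \<beta> (Suc i))) \<and> 0 < \<beta>"
    then show "enr_ok a b N (X \<beta>) (Y \<beta>) \<beta>" unfolding enr_ok_def by blast
  qed
  have Xl: "((\<lambda>\<beta>. X \<beta> i) \<longlongrightarrow> \<xi> i) (at_right 0)" if "i \<le> Suc N" for i
    using collapse that by auto
  have Yl: "((\<lambda>\<beta>. Y \<beta> i) \<longlongrightarrow> \<xi> i) (at_right 0)" if i: "i \<le> Suc N" for i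
  proof -
    have "((\<lambda>\<beta>. X \<beta> i - \<beta>) \<longlongrightarrow> \<xi> i - 0) (at_right 0)"
      by (intro tendsto_diff Xl[OF i] tendsto_ident_at)
    then have l: "((\<lambda>\<beta>. X \<beta> i - \<beta>) \<longlongrightarrow> \<xi> i) (at_right 0)" by simp
    have e: "eventually (\<lambda>\<beta>. X \<beta> i - \<beta> = Y \<beta> i) (at_right 0)"
      using ev by (rule eventually_mono) (use i in \<open>auto simp: enr_ok_def\<close>)
    show ?thesis by (rule Lim_transform_eventually[OF l e])
  qed
  have smx: "\<forall>k<Suc N. \<xi> k < \<xi> (Suc k)" using mesh(3) by auto
  have lex: "\<xi> i \<le> \<xi> j" if "i \<le> j" "j \<le> Suc N" for i j
    using mono_pts[of "Suc N" \<xi> i j] smx that by (simp add: less_imp_le)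
  have xr: "a \<le> \<xi> i" "\<xi> i \<le> b" if "i \<le> Suc N" for i
    using lex[of 0 i] lex[of i "Suc N"] that mesh by auto
  have fi1: "f integrable_on {a..b}" and fi3: "(\<lambda>x. \<bar>f x\<bar>) integrable_on {a..b}"
    using f unfolding absolutely_integrable_on_def by (auto simp: real_norm_def)
  have "(\<lambda>x. x * f x) absolutely_integrable_on {a..b}"
  proof (rule absolutely_integrable_bounded_measurable_product_real)
    show "(\<lambda>x. x) \<in> borel_measurable (lebesgue_on {a..b})"
      by (rule continuous_imp_measurable_on_sets_lebesgue) (auto intro: continuous_on_id)
  qed (use f in auto)
  then have fi2: "(\<lambda>x. x * f x) integrable_on {a..b}"
    unfolding absolutely_integrable_on_def by auto
  have sub: "{p..q} \<subseteq> {a..b}" if "a \<le> p" "q \<le> b" for p q using that by auto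
  obtain cu du where cu: "\<forall>i\<le>N. \<forall>x\<in>{\<xi> i<..<\<xi> (Suc i)}. u x = cu i * x + du i"
    using coef_choice[OF u] by blast
  obtain cv dv where cv: "\<forall>i\<le>N. \<forall>x\<in>{\<xi> i<..<\<xi> (Suc i)}. v x = cv i * x + dv i"
    using coef_choice[OF v] by blast
  have lru: "lval u (\<xi> (Suc i)) = cu i * \<xi> (Suc i) + du i" "rval u (\<xi> i) = cu i * \<xi> i + du i"
    if "i \<le> N" for i using lr_vals[of "\<xi> i" "\<xi> (Suc i)" u] cu mesh(3) that by auto
  have lrv: "lval v (\<xi> (Suc i)) = cv i * \<xi> (Suc i) + dv i" "rval v (\<xi> i) = cv i * \<xi> i + dv i"
    if "i \<le> N" for i using lr_vals[of "\<xi> i" "\<xi> (Suc i)" v] cv mesh(3) that by auto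
  define \<Delta>u where "\<Delta>u i = lval u (\<xi> (Suc i)) - rval u (\<xi> i)" for i
  define \<Delta>v where "\<Delta>v i = lval v (\<xi> (Suc i)) - rval v (\<xi> i)" for i
  define JJ where "JJ = (\<Sum>i\<le>Suc N. D * jump \<xi> N u i * jump \<xi> N v i)"
  define L1 where "L1 = (\<Sum>i\<le>N. \<Delta>u i * \<Delta>v i / (\<xi> (Suc i) - \<xi> i))"
  define L3 where "L3 = (\<Sum>i\<le>N. Lf f (\<xi> i) (\<xi> (Suc i)) (rval v (\<xi> i)) (lval v (\<xi> (Suc i))))"
  have bz_eq: "bz_form \<xi> N D u v = L1 + JJ"
  proof -
    have "integral {\<xi> i..\<xi> (Suc i)} (\<lambda>x. deriv u x * deriv v x) = \<Delta>u i * \<Delta>v i / (\<xi> (Suc i) - \<xi> i)"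
      if i: "i \<le> N" for i
    proof -
      have lt: "\<xi> i < \<xi> (Suc i)" using mesh(3) i by auto
      have "((\<lambda>x. deriv u x * deriv v x) has_integral (cu i * cv i) * (\<xi> (Suc i) - \<xi> i)) {\<xi> i..\<xi> (Suc i)}"
      proof (rule const_piece)
        show "\<xi> i \<le> \<xi> (Suc i)" using lt by simp
        fix x assume x: "x \<in> {\<xi> i<..<\<xi> (Suc i)}"
        show "deriv u x * deriv v x = cu i * cv i"
          using deriv_aff[OF x, of u "cu i" "du i"] deriv_aff[OF x, of v "cv i" "dv i"] cu cv i by auto
      qed
      then have I: "integral {\<xi> i..\<xi> (Suc i)} (\<lambda>x. deriv u x * deriv v x) = cu i * cv i * (\<xi> (Suc i) - \<xi> i)"
        by (rule integral_unique)
      have du: "\<Delta>u i = cu i * (\<xi> (Suc i) - \<xi> i)" and dv: "\<Delta>v i = cv i * (\<xi> (Suc i) - \<xi> i)"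
        unfolding \<Delta>u_def \<Delta>v_def using lru[OF i] lrv[OF i] by (simp_all add: algebra_simps)
      have ne: "\<xi> (Suc i) - \<xi> i \<noteq> 0" using lt by simp
      have g: "c1 * c2 * l = c1 * l * (c2 * l) / l" if "l \<noteq> 0" for c1 c2 l :: real
        using that by simp
      show ?thesis unfolding I du dv by (rule g[OF ne])
    qed
    then show ?thesis unfolding bz_form_def L1_def JJ_def
      by (simp add: sum_distrib_left mult.assoc distrib_left)
  qed
  have fv_eq: "integral {a..b} (\<lambda>x. f x * v x) = L3"
  proof -
    define I where "I i = Lf f (\<xi> i) (\<xi> (Suc i)) (rval v (\<xi> i)) (lval v (\<xi> (Suc i)))" for i
    have "\<forall>k<Suc N. ((\<lambda>x. f x * v x) has_integral I k) {\<xi> k..\<xi> (Suc k)}"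
    proof (intro allI impI)
      fix k assume k: "k < Suc N"
      then have kN: "k \<le> N" by simp
      have sb: "{\<xi> k..\<xi> (Suc k)} \<subseteq> {a..b}" using xr[of k] xr[of "Suc k"] k by auto
      have lt: "\<xi> k < \<xi> (Suc k)" using mesh(3) kN by auto
      show "((\<lambda>x. f x * v x) has_integral I k) {\<xi> k..\<xi> (Suc k)}"
        unfolding I_def Lf_def
      proof (rule aff_piece)
        show "f integrable_on {\<xi> k..\<xi> (Suc k)}" by (rule integrable_subinterval_real[OF fi1 sb])
        show "(\<lambda>x. x * f x) integrable_on {\<xi> k..\<xi> (Suc k)}" by (rule integrable_subinterval_real[OF fi2 sb])
        show "\<xi> k < \<xi> (Suc k)" by (rule lt)
        fix x assume x: "x \<in> {\<xi> k<..<\<xi> (Suc k)}"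
        show "v x = rval v (\<xi> k) + (lval v (\<xi> (Suc k)) - rval v (\<xi> k)) * (x - \<xi> k) / (\<xi> (Suc k) - \<xi> k)"
          unfolding lrv[OF kN] using cv kN x aff_id[of "\<xi> k" "\<xi> (Suc k)" "cv k" x "dv k"] lt by auto
      qed
    qed
    then have "((\<lambda>x. f x * v x) has_integral (\<Sum>k<Suc N. I k)) {\<xi> 0..\<xi> (Suc N)}"
      using smx by (intro pieces_has_integral) (auto simp: less_imp_le)
    then show ?thesis unfolding L3_def I_def using mesh
      by (simp add: integral_unique lessThan_Suc_atMost)
  qed
  have T1: "((\<lambda>\<beta>. \<Sum>i\<le>N. \<Delta>u i * \<Delta>v i / (Y \<beta> (Suc i) - X \<beta> i)) \<longlongrightarrow> L1) (at_right 0)"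
    unfolding L1_def
  proof (intro tendsto_sum)
    fix i assume "i \<in> {..N}"
    then have i: "i \<le> N" by simp
    have "\<xi> (Suc i) - \<xi> i \<noteq> 0" using mesh(3) i by force
    then show "((\<lambda>\<beta>. \<Delta>u i * \<Delta>v i / (Y \<beta> (Suc i) - X \<beta> i)) \<longlongrightarrow> \<Delta>u i * \<Delta>v i / (\<xi> (Suc i) - \<xi> i)) (at_right 0)"
      using i by (intro tendsto_intros Xl Yl) auto
  qed
  have T2: "((\<lambda>\<beta>. \<Sum>i\<le>Suc N. Lf f (Y \<beta> i) (X \<beta> i) (enr_vals \<xi> N v (2 * i)) (enr_vals \<xi> N v (2 * i + 1))) \<longlongrightarrow> 0) (at_right 0)"
  proof (rule tendsto_null_sum)
    fix i assume "i \<in> {..Suc N}"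
    then have i: "i \<le> Suc N" by simp
    define C where "C = \<bar>enr_vals \<xi> N v (2 * i)\<bar> + \<bar>enr_vals \<xi> N v (2 * i + 1)\<bar>"
    have "((\<lambda>\<beta>. C * integral {Y \<beta> i..X \<beta> i} (\<lambda>x. \<bar>f x\<bar>)) \<longlongrightarrow> C * integral {\<xi> i..\<xi> i} (\<lambda>x. \<bar>f x\<bar>)) (at_right 0)"
    proof (intro tendsto_mult tendsto_const integral_limit[OF fi3 Yl[OF i] Xl[OF i]])
      show "\<forall>\<^sub>F t in at_right 0. a \<le> Y t i \<and> Y t i \<le> X t i \<and> X t i \<le> b"
        using ev by (rule eventually_mono) (use enr_bounds(1) i in blast)
    qed (use xr[OF i] in auto)
    then have g0: "((\<lambda>\<beta>. C * integral {Y \<beta> i..X \<beta> i} (\<lambda>x. \<bar>f x\<bar>)) \<longlongrightarrow> 0) (at_right 0)"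
      by simp
    show "((\<lambda>\<beta>. Lf f (Y \<beta> i) (X \<beta> i) (enr_vals \<xi> N v (2 * i)) (enr_vals \<xi> N v (2 * i + 1))) \<longlongrightarrow> 0) (at_right 0)"
    proof (rule Lim_null_comparison[OF _ g0])
      show "\<forall>\<^sub>F \<beta> in at_right 0. norm (Lf f (Y \<beta> i) (X \<beta> i) (enr_vals \<xi> N v (2 * i)) (enr_vals \<xi> N v (2 * i + 1)))
              \<le> C * integral {Y \<beta> i..X \<beta> i} (\<lambda>x. \<bar>f x\<bar>)"
        using ev
      proof (rule eventually_mono)
        fix \<beta> assume E: "enr_ok a b N (X \<beta>) (Y \<beta>) \<beta>"
        have bd: "a \<le> Y \<beta> i" "X \<beta> i \<le> b" using enr_bounds(1)[OF E i] by auto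
        have lt: "Y \<beta> i < X \<beta> i" using E i by (auto simp: enr_ok_def)
        have sb: "{Y \<beta> i..X \<beta> i} \<subseteq> {a..b}" using bd by auto
        show "norm (Lf f (Y \<beta> i) (X \<beta> i) (enr_vals \<xi> N v (2 * i)) (enr_vals \<xi> N v (2 * i + 1)))
              \<le> C * integral {Y \<beta> i..X \<beta> i} (\<lambda>x. \<bar>f x\<bar>)"
          unfolding Lf_def C_def real_norm_def
          by (rule aff_bound[OF integrable_subinterval_real[OF fi1 sb] integrable_subinterval_real[OF fi2 sb]
                integrable_subinterval_real[OF fi3 sb] lt])
      qed
    qed
  qed
  have T3: "((\<lambda>\<beta>. \<Sum>i\<le>N. Lf f (X \<beta> i) (Y \<beta> (Suc i)) (rval v (\<xi> i)) (lval v (\<xi> (Suc i)))) \<longlongrightarrow> L3) (at_right 0)"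
    unfolding L3_def
  proof (intro tendsto_sum)
    fix i assume "i \<in> {..N}"
    then have i: "i \<le> N" by simp
    have ne: "\<xi> (Suc i) - \<xi> i \<noteq> 0" using mesh(3) i by force
    have evb: "\<forall>\<^sub>F t in at_right 0. a \<le> X t i \<and> X t i \<le> Y t (Suc i) \<and> Y t (Suc i) \<le> b"
      using ev by (rule eventually_mono) (use enr_bounds(2) i in blast)
    have lim0: "a \<le> \<xi> i" "\<xi> i \<le> \<xi> (Suc i)" "\<xi> (Suc i) \<le> b"
      using xr[of i] xr[of "Suc i"] mesh(3) i by (auto simp: less_imp_le)
    have IF: "((\<lambda>t. integral {X t i..Y t (Suc i)} f) \<longlongrightarrow> integral {\<xi> i..\<xi> (Suc i)} f) (at_right 0)"
      using i by (intro integral_limit[OF fi1 Xl Yl evb lim0]) auto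
    have IG: "((\<lambda>t. integral {X t i..Y t (Suc i)} (\<lambda>x. x * f x)) \<longlongrightarrow> integral {\<xi> i..\<xi> (Suc i)} (\<lambda>x. x * f x)) (at_right 0)"
      using i by (intro integral_limit[OF fi2 Xl Yl evb lim0]) auto
    have XL: "((\<lambda>t. X t i) \<longlongrightarrow> \<xi> i) (at_right 0)" using i by (intro Xl) auto
    have YL: "((\<lambda>t. Y t (Suc i)) \<longlongrightarrow> \<xi> (Suc i)) (at_right 0)" using i by (intro Yl) auto
    show "((\<lambda>t. Lf f (X t i) (Y t (Suc i)) (rval v (\<xi> i)) (lval v (\<xi> (Suc i)))) \<longlongrightarrow>
           Lf f (\<xi> i) (\<xi> (Suc i)) (rval v (\<xi> i)) (lval v (\<xi> (Suc i)))) (at_right 0)"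
      unfolding Lf_def by (intro tendsto_intros IF IG XL YL ne)
  qed
  have lim: "((\<lambda>\<beta>. (JJ + (\<Sum>i\<le>N. \<Delta>u i * \<Delta>v i / (Y \<beta> (Suc i) - X \<beta> i)))
         - ((\<Sum>i\<le>Suc N. Lf f (Y \<beta> i) (X \<beta> i) (enr_vals \<xi> N v (2 * i)) (enr_vals \<xi> N v (2 * i + 1)))
            + (\<Sum>i\<le>N. Lf f (X \<beta> i) (Y \<beta> (Suc i)) (rval v (\<xi> i)) (lval v (\<xi> (Suc i))))))
        \<longlongrightarrow> (JJ + L1) - (0 + L3)) (at_right 0)"
    by (intro tendsto_intros T1 T2 T3)
  have tgt: "bz_form \<xi> N D u v - integral {a..b} (\<lambda>x. f x * v x) = (JJ + L1) - (0 + L3)"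
    using bz_eq fv_eq by simp
  show ?thesis unfolding tgt
  proof (rule Lim_transform_eventually[OF lim])
    show "\<forall>\<^sub>F \<beta> in at_right 0. (JJ + (\<Sum>i\<le>N. \<Delta>u i * \<Delta>v i / (Y \<beta> (Suc i) - X \<beta> i)))
         - ((\<Sum>i\<le>Suc N. Lf f (Y \<beta> i) (X \<beta> i) (enr_vals \<xi> N v (2 * i)) (enr_vals \<xi> N v (2 * i + 1)))
            + (\<Sum>i\<le>N. Lf f (X \<beta> i) (Y \<beta> (Suc i)) (rval v (\<xi> i)) (lval v (\<xi> (Suc i))))) =
        fe_form a b N (X \<beta>) (Y \<beta>) D \<beta> (embed \<xi> N (X \<beta>) (Y \<beta>) u) (embed \<xi> N (X \<beta>) (Y \<beta>) v)
                    - integral {a..b} (\<lambda>x. f x * embed \<xi> N (X \<beta>) (Y \<beta>) v x)"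
      using ev
    proof (rule eventually_mono)
      fix \<beta> assume E: "enr_ok a b N (X \<beta>) (Y \<beta>) \<beta>"
      show "(JJ + (\<Sum>i\<le>N. \<Delta>u i * \<Delta>v i / (Y \<beta> (Suc i) - X \<beta> i)))
         - ((\<Sum>i\<le>Suc N. Lf f (Y \<beta> i) (X \<beta> i) (enr_vals \<xi> N v (2 * i)) (enr_vals \<xi> N v (2 * i + 1)))
            + (\<Sum>i\<le>N. Lf f (X \<beta> i) (Y \<beta> (Suc i)) (rval v (\<xi> i)) (lval v (\<xi> (Suc i))))) =
        fe_form a b N (X \<beta>) (Y \<beta>) D \<beta> (embed \<xi> N (X \<beta>) (Y \<beta>) u) (embed \<xi> N (X \<beta>) (Y \<beta>) v)
                    - integral {a..b} (\<lambda>x. f x * embed \<xi> N (X \<beta>) (Y \<beta>) v x)"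
        unfolding fe_eq[OF E] fint_eq[OF E fi1 fi2] JJ_def \<Delta>u_def \<Delta>v_def by simp
    qed
  qed
qed

theorem theorem2p1:
  fixes a b D :: real and N :: nat and \<xi> :: "nat \<Rightarrow> real" and f u :: "real \<Rightarrow> real"
    and X Y :: "real \<Rightarrow> nat \<Rightarrow> real"
  assumes D_pos: "D > 0"
    and mesh: "\<xi> 0 = a" "\<xi> (Suc N) = b" "\<forall>i\<le>N. \<xi> i < \<xi> (Suc i)"
    and f: "f absolutely_integrable_on {a..b}"
    and enriched: "\<forall>\<^sub>F \<beta> in at_right 0.
        Y \<beta> 0 = a \<and> X \<beta> (Suc N) = b
        \<and> (\<forall>i\<le>Suc N. X \<beta> i - Y \<beta> i = \<beta>)
        \<and> (\<forall>i\<le>N. X \<beta> i < Y \<beta> (Suc i))"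
    and collapse: "\<forall>i\<le>Suc N. ((\<lambda>\<beta>. X \<beta> i) \<longlongrightarrow> \<xi> i) (at_right 0)"
    and u: "in_VhD \<xi> N u"
  shows "(\<forall>v. in_VhD \<xi> N v \<longrightarrow>
            ((\<lambda>\<beta>. fe_form a b N (X \<beta>) (Y \<beta>) D \<beta>
                      (embed \<xi> N (X \<beta>) (Y \<beta>) u) (embed \<xi> N (X \<beta>) (Y \<beta>) v)
                    - integral {a..b} (\<lambda>x. f x * embed \<xi> N (X \<beta>) (Y \<beta>) v x))
              \<longlongrightarrow> 0) (at_right 0))
         \<longleftrightarrow>
         (\<forall>v. in_VhD \<xi> N v \<longrightarrow>
            bz_form \<xi> N D u v = integral {a..b} (\<lambda>x. f x * v x))"
proof -
  have nb: "(at_right (0::real)) \<noteq> bot" by simp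
  show ?thesis
  proof (intro iffI allI impI)
    fix v assume H: "\<forall>v. in_VhD \<xi> N v \<longrightarrow>
            ((\<lambda>\<beta>. fe_form a b N (X \<beta>) (Y \<beta>) D \<beta>
                      (embed \<xi> N (X \<beta>) (Y \<beta>) u) (embed \<xi> N (X \<beta>) (Y \<beta>) v)
                    - integral {a..b} (\<lambda>x. f x * embed \<xi> N (X \<beta>) (Y \<beta>) v x))
              \<longlongrightarrow> 0) (at_right 0)"
      and v: "in_VhD \<xi> N v"
    have "bz_form \<xi> N D u v - integral {a..b} (\<lambda>x. f x * v x) = 0"
      by (rule tendsto_unique[OF nb main_limit[OF mesh f enriched collapse u v] H[rule_format, OF v]])
    then show "bz_form \<xi> N D u v = integral {a..b} (\<lambda>x. f x * v x)" by simp
  next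
    fix v assume H: "\<forall>v. in_VhD \<xi> N v \<longrightarrow>
            bz_form \<xi> N D u v = integral {a..b} (\<lambda>x. f x * v x)"
      and v: "in_VhD \<xi> N v"
    show "((\<lambda>\<beta>. fe_form a b N (X \<beta>) (Y \<beta>) D \<beta>
                      (embed \<xi> N (X \<beta>) (Y \<beta>) u) (embed \<xi> N (X \<beta>) (Y \<beta>) v)
                    - integral {a..b} (\<lambda>x. f x * embed \<xi> N (X \<beta>) (Y \<beta>) v x))
              \<longlongrightarrow> 0) (at_right 0)"
      using main_limit[OF mesh f enriched collapse u v, of D] H v by simp
  qed
qed

end
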